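(* Let $d\ge2$ and $\gamma^\mu\in\mathbb{S}^d$ with zero diagonal and $\gamma^\mu_{ij}>0$ for all $i\ne j$, and set $\gamma^\ast=\min_{i\ne j}\gamma^\mu_{ij}$. For $\mu\in\Delta^d$ let $\widetilde{c}^\mu$ be as defined in the context and let $\widetilde{a}^\mu$ be the same matrix with $\gamma^\mu_{ij}$ replaced by $1$ for all $i\ne j$. Then $\widetilde{c}^\mu-\gamma^\ast\widetilde{a}^\mu$ is positive semidefinite, and $\mathrm{rk}(\widetilde{c}^\mu)=\mathrm{rk}(\widetilde{a}^\mu)$.
   Context: $\Delta^d$ is the unit simplex. For $\mu\in\Delta^d$ and $\gamma\in\mathbb{S}^d$ with zero diagonal, $c\in\mathbb{S}^d$ is given by $c_{ii}=\sum_{j\ne i}\gamma_{ij}\mu^i\mu^j$, $c_{ij}=-\gamma_{ij}\mu^i\mu^j$ ($i\ne j$); $\widetilde{c}^\mu$ denotes this matrix for $\gamma=\gamma^\mu$ with the $d$-th row and column deleted. *)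

theory Defs
  imports "Jordan_Normal_Form.DL_Rank"
begin

text \<open>Indices are 0-based: 0..d-1. The d-th row/column is index d-1.\<close>

definition unit_simplex :: "nat \<Rightarrow> (nat \<Rightarrow> real) set" where
  "unit_simplex d = {\<mu>. (\<forall>i<d. 0 \<le> \<mu> i) \<and> (\<Sum>i<d. \<mu> i) = 1}"

definition c_mat :: "nat \<Rightarrow> (nat \<Rightarrow> nat \<Rightarrow> real) \<Rightarrow> (nat \<Rightarrow> real) \<Rightarrow> real mat" where
  "c_mat d \<gamma> \<mu> = mat d d (\<lambda>(i,j). if i = j then (\<Sum>k\<in>{..<d} - {i}. \<gamma> i k * \<mu> i * \<mu> k)
                                    else - \<gamma> i j * \<mu> i * \<mu> j)"

definition c_tilde :: "nat \<Rightarrow> (nat \<Rightarrow> nat \<Rightarrow> real) \<Rightarrow> (nat \<Rightarrow> real) \<Rightarrow> real mat" where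
  "c_tilde d \<gamma> \<mu> = mat (d - 1) (d - 1) (\<lambda>(i,j). c_mat d \<gamma> \<mu> $$ (i,j))"

definition ones_offdiag :: "nat \<Rightarrow> nat \<Rightarrow> real" where
  "ones_offdiag i j = (if i = j then 0 else 1)"

definition psd :: "nat \<Rightarrow> real mat \<Rightarrow> bool" where
  "psd n M \<longleftrightarrow> M \<in> carrier_mat n n \<and> M\<^sup>T = M \<and> (\<forall>v \<in> carrier_vec n. 0 \<le> v \<bullet> (M *\<^sub>v v))"

end

theory Submission
  imports Defs
begin

lemma rank_kernel:
  fixes A :: "'a::field mat"
  assumes A: "A \<in> carrier_mat n n"
  shows "vec_space.rank n A + vectorspace.dim class_ring ((module_vec TYPE('a) n)\<lparr>carrier := {v \<in> carrier_vec n. A *\<^sub>v v = 0\<^sub>v n}\<rparr>) = n"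
proof -
  interpret vec_space "TYPE('a)" n .
  interpret lm: linear_map class_ring V V "\<lambda>v. A *\<^sub>v v"
  proof (unfold_locales)
    show "(*\<^sub>v) A \<in> LinearCombinations.module_hom class_ring V V"
      unfolding LinearCombinations.module_hom_def
      using A by (auto simp: mult_add_distrib_mat_vec mult_mat_vec)
  qed
  have im: "lm.imT = span (set (cols A))"
    using col_space_eq[OF A] A unfolding col_space_def lm.im_def by auto
  have ker: "lm.kerT = {v \<in> carrier_vec n. A *\<^sub>v v = 0\<^sub>v n}"
    using A unfolding lm.ker_def by auto
  have "vectorspace.dim class_ring (vs lm.imT) + vectorspace.dim class_ring (vs lm.kerT) = dim"
    by (rule lm.rank_nullity_main(1)) simp
  then show ?thesis unfolding im ker dim_is_n rank_def by simp
qed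


definition wext :: "nat \<Rightarrow> real vec \<Rightarrow> nat \<Rightarrow> real" where
  "wext d v i = (if i < d - 1 then v $ i else 0)"

lemma ct_entry:
  assumes d: "d \<ge> 1" and v: "v \<in> carrier_vec (d - 1)" and i: "i < d - 1"
  shows "(c_tilde d g \<mu> *\<^sub>v v) $ i = (\<Sum>j<d. g i j * \<mu> i * \<mu> j * (wext d v i - wext d v j))"
proof -
  let ?w = "wext d v"
  let ?c = "\<lambda>j. c_mat d g \<mu> $$ (i, j)"
  have "(c_tilde d g \<mu> *\<^sub>v v) $ i = (\<Sum>j<d - 1. ?c j * v $ j)"
    using v i by (simp add: c_tilde_def mult_mat_vec_def scalar_prod_def lessThan_atLeast0 mult.commute)
  also have "\<dots> = (\<Sum>j<d - 1. ?c j * ?w j)"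
    by (rule sum.cong) (auto simp: wext_def)
  also have "\<dots> = (\<Sum>j<d. ?c j * ?w j)"
  proof -
    have "{..<d} = insert (d - 1) {..<d - 1}" using d by auto
    then show ?thesis by (simp add: wext_def)
  qed
  also have "\<dots> = ?c i * ?w i + (\<Sum>j\<in>{..<d} - {i}. ?c j * ?w j)"
    using i by (subst sum.remove[of _ i]) auto
  also have "\<dots> = (\<Sum>j\<in>{..<d} - {i}. g i j * \<mu> i * \<mu> j * ?w i) + (\<Sum>j\<in>{..<d} - {i}. - (g i j * \<mu> i * \<mu> j) * ?w j)"
  proof -
    have 1: "?c i = (\<Sum>j\<in>{..<d} - {i}. g i j * \<mu> i * \<mu> j)"
      using i by (simp add: c_mat_def)
    have 2: "(\<Sum>j\<in>{..<d} - {i}. ?c j * ?w j) = (\<Sum>j\<in>{..<d} - {i}. - (g i j * \<mu> i * \<mu> j) * ?w j)"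
      using i by (intro sum.cong) (auto simp: c_mat_def)
    show ?thesis unfolding 1 2 by (simp add: sum_distrib_right)
  qed
  also have "\<dots> = (\<Sum>j\<in>{..<d} - {i}. g i j * \<mu> i * \<mu> j * (?w i - ?w j))"
    by (simp add: sum.distrib[symmetric] algebra_simps)
  also have "\<dots> = (\<Sum>j<d. g i j * \<mu> i * \<mu> j * (?w i - ?w j))"
    using i by (subst (2) sum.remove[of _ i]) auto
  finally show ?thesis .
qed

lemma ct_quad:
  assumes d: "d \<ge> 1" and v: "v \<in> carrier_vec (d - 1)"
    and sym: "\<forall>i<d. \<forall>j<d. g i j = g j i"
  shows "v \<bullet> (c_tilde d g \<mu> *\<^sub>v v) = (\<Sum>i<d. \<Sum>j<d. g i j * \<mu> i * \<mu> j * (wext d v i - wext d v j)^2) / 2"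
proof -
  let ?w = "wext d v"
  define f where "f i j = g i j * \<mu> i * \<mu> j * ?w i * (?w i - ?w j)" for i j
  have "v \<bullet> (c_tilde d g \<mu> *\<^sub>v v) = (\<Sum>i<d - 1. ?w i * (\<Sum>j<d. g i j * \<mu> i * \<mu> j * (?w i - ?w j)))"
  proof -
    have dv: "dim_vec (c_tilde d g \<mu> *\<^sub>v v) = d - 1" by (simp add: c_tilde_def)
    show ?thesis unfolding scalar_prod_def dv lessThan_atLeast0[symmetric]
      by (rule sum.cong) (auto simp: ct_entry[OF d v] wext_def)
  qed
  also have "\<dots> = (\<Sum>i<d. ?w i * (\<Sum>j<d. g i j * \<mu> i * \<mu> j * (?w i - ?w j)))"
  proof -
    have "{..<d} = insert (d - 1) {..<d - 1}" using d by auto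
    then show ?thesis by (simp add: wext_def)
  qed
  also have "\<dots> = (\<Sum>i<d. \<Sum>j<d. f i j)"
    by (simp add: f_def sum_distrib_left algebra_simps)
  finally have Q: "v \<bullet> (c_tilde d g \<mu> *\<^sub>v v) = (\<Sum>i<d. \<Sum>j<d. f i j)" .
  have Q2: "(\<Sum>i<d. \<Sum>j<d. f i j) = (\<Sum>i<d. \<Sum>j<d. f j i)" by (rule sum.swap)
  have "(\<Sum>i<d. \<Sum>j<d. f i j) + (\<Sum>i<d. \<Sum>j<d. f j i) = (\<Sum>i<d. \<Sum>j<d. f i j + f j i)"
    by (simp add: sum.distrib)
  also have "\<dots> = (\<Sum>i<d. \<Sum>j<d. g i j * \<mu> i * \<mu> j * (?w i - ?w j)^2)"
    using sym by (intro sum.cong refl) (auto simp: f_def power2_eq_square algebra_simps)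
  finally show ?thesis using Q Q2 by simp
qed

lemma ct_nonneg:
  assumes d: "d \<ge> 1" and v: "v \<in> carrier_vec (d - 1)"
    and sym: "\<forall>i<d. \<forall>j<d. g i j = g j i"
    and pos: "\<forall>i<d. \<forall>j<d. i \<noteq> j \<longrightarrow> g i j \<ge> 0"
    and mu: "\<forall>i<d. \<mu> i \<ge> 0"
  shows "0 \<le> v \<bullet> (c_tilde d g \<mu> *\<^sub>v v)"
  unfolding ct_quad[OF d v sym]
proof -
  have "0 \<le> (\<Sum>i<d. \<Sum>j<d. g i j * \<mu> i * \<mu> j * (wext d v i - wext d v j)^2)"
  proof (intro sum_nonneg)
    fix i j assume "i \<in> {..<d}" "j \<in> {..<d}"
    then show "0 \<le> g i j * \<mu> i * \<mu> j * (wext d v i - wext d v j)^2"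
      using pos mu by (cases "i = j") auto
  qed
  then show "0 \<le> (\<Sum>i<d. \<Sum>j<d. g i j * \<mu> i * \<mu> j * (wext d v i - wext d v j)^2) / 2" by simp
qed

lemma ct_kernel:
  assumes d: "d \<ge> 1" and v: "v \<in> carrier_vec (d - 1)"
    and sym: "\<forall>i<d. \<forall>j<d. g i j = g j i"
    and pos: "\<forall>i<d. \<forall>j<d. i \<noteq> j \<longrightarrow> g i j > 0"
    and mu: "\<forall>i<d. \<mu> i \<ge> 0"
  shows "(c_tilde d g \<mu> *\<^sub>v v = 0\<^sub>v (d - 1)) \<longleftrightarrow> (\<forall>i<d. \<forall>j<d. \<mu> i * \<mu> j * (wext d v i - wext d v j) = 0)"
proof
  assume z: "c_tilde d g \<mu> *\<^sub>v v = 0\<^sub>v (d - 1)"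
  have "v \<bullet> (c_tilde d g \<mu> *\<^sub>v v) = 0" unfolding z using v by simp
  then have S: "(\<Sum>i<d. \<Sum>j<d. g i j * \<mu> i * \<mu> j * (wext d v i - wext d v j)^2) = 0"
    unfolding ct_quad[OF d v sym] by simp
  have nn: "\<And>i j. i < d \<Longrightarrow> j < d \<Longrightarrow> 0 \<le> g i j * \<mu> i * \<mu> j * (wext d v i - wext d v j)^2"
    subgoal for i j using pos mu by (cases "i = j") (auto simp: less_imp_le)
    done
  have "\<forall>i\<in>{..<d}. (\<Sum>j<d. g i j * \<mu> i * \<mu> j * (wext d v i - wext d v j)^2) = 0"
  proof (rule iffD1[OF sum_nonneg_eq_0_iff S])
    show "finite {..<d}" by simp
    fix i assume "i \<in> {..<d}"
    then show "0 \<le> (\<Sum>j<d. g i j * \<mu> i * \<mu> j * (wext d v i - wext d v j)^2)"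
      by (intro sum_nonneg nn) auto
  qed
  note R = this
  have T: "g i j * \<mu> i * \<mu> j * (wext d v i - wext d v j)^2 = 0" if ij: "i < d" "j < d" for i j
  proof -
    have "(\<Sum>j<d. g i j * \<mu> i * \<mu> j * (wext d v i - wext d v j)^2) = 0" using R ij by auto
    then have "\<forall>j\<in>{..<d}. g i j * \<mu> i * \<mu> j * (wext d v i - wext d v j)^2 = 0"
      using nn ij by (subst (asm) sum_nonneg_eq_0_iff) auto
    then show ?thesis using ij by auto
  qed
  show "\<forall>i<d. \<forall>j<d. \<mu> i * \<mu> j * (wext d v i - wext d v j) = 0"
  proof (intro allI impI)
    fix i j assume ij: "i < d" "j < d"
    show "\<mu> i * \<mu> j * (wext d v i - wext d v j) = 0"
    proof (cases "i = j")
      case False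
      then have "g i j > 0" using pos ij by auto
      then have "\<mu> i * \<mu> j * (wext d v i - wext d v j)^2 = 0" using T[OF ij] by simp
      then show ?thesis by (auto simp: power2_eq_square)
    qed simp
  qed
next
  assume H: "\<forall>i<d. \<forall>j<d. \<mu> i * \<mu> j * (wext d v i - wext d v j) = 0"
  show "c_tilde d g \<mu> *\<^sub>v v = 0\<^sub>v (d - 1)"
  proof (rule eq_vecI)
    show "dim_vec (c_tilde d g \<mu> *\<^sub>v v) = dim_vec (0\<^sub>v (d - 1))" by (simp add: c_tilde_def)
    fix i assume "i < dim_vec (0\<^sub>v (d - 1) :: real vec)"
    then have i: "i < d - 1" by simp
    have "(c_tilde d g \<mu> *\<^sub>v v) $ i = (\<Sum>j<d. g i j * (\<mu> i * \<mu> j * (wext d v i - wext d v j)))"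
      unfolding ct_entry[OF d v i] by (simp add: mult.assoc)
    also have "\<dots> = 0" using H i by (intro sum.neutral) (simp del: mult_eq_0_iff)
    finally show "(c_tilde d g \<mu> *\<^sub>v v) $ i = 0\<^sub>v (d - 1) $ i" using i by simp
  qed
qed

lemma ct_transpose:
  assumes sym: "\<forall>i<d. \<forall>j<d. g i j = g j i"
  shows "(c_tilde d g \<mu>)\<^sup>T = c_tilde d g \<mu>"
  by (rule eq_matI) (auto simp: c_tilde_def c_mat_def sym)

lemma ct_lin:
  "c_tilde d g \<mu> - s \<cdot>\<^sub>m c_tilde d h \<mu> = c_tilde d (\<lambda>i j. g i j - s * h i j) \<mu>"
  by (rule eq_matI) (auto simp: c_tilde_def c_mat_def sum_subtractf sum_distrib_left algebra_simps)

theorem mainTheorem17: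
  fixes d :: nat and \<gamma> :: "nat \<Rightarrow> nat \<Rightarrow> real" and \<mu> :: "nat \<Rightarrow> real"
  assumes "d \<ge> 2"
    and "\<forall>i<d. \<forall>j<d. \<gamma> i j = \<gamma> j i"
    and "\<forall>i<d. \<gamma> i i = 0"
    and "\<forall>i<d. \<forall>j<d. i \<noteq> j \<longrightarrow> \<gamma> i j > 0"
    and "\<gamma>s = Min {\<gamma> i j | i j. i < d \<and> j < d \<and> i \<noteq> j}"
    and "\<mu> \<in> unit_simplex d"
  shows "psd (d - 1) (c_tilde d \<gamma> \<mu> - \<gamma>s \<cdot>\<^sub>m c_tilde d ones_offdiag \<mu>)
    \<and> vec_space.rank (d - 1) (c_tilde d \<gamma> \<mu>) = vec_space.rank (d - 1) (c_tilde d ones_offdiag \<mu>)"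
proof -
  have d1: "d \<ge> 1" using assms(1) by simp
  have mu: "\<forall>i<d. \<mu> i \<ge> 0" using assms(6) by (simp add: unit_simplex_def)
  have fin: "finite {\<gamma> i j | i j. i < d \<and> j < d \<and> i \<noteq> j}"
  proof (rule finite_subset)
    show "{\<gamma> i j | i j. i < d \<and> j < d \<and> i \<noteq> j} \<subseteq> (\<lambda>(i, j). \<gamma> i j) ` ({..<d} \<times> {..<d})" by auto
  qed simp
  have le: "\<gamma>s \<le> \<gamma> i j" if "i < d" "j < d" "i \<noteq> j" for i j
    unfolding assms(5) using that by (intro Min_le fin) auto
  let ?g = "\<lambda>i j. \<gamma> i j - \<gamma>s * ones_offdiag i j"
  have symg: "\<forall>i<d. \<forall>j<d. ?g i j = ?g j i" using assms(2) by (auto simp: ones_offdiag_def)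
  have posg: "\<forall>i<d. \<forall>j<d. i \<noteq> j \<longrightarrow> ?g i j \<ge> 0" using le by (auto simp: ones_offdiag_def)
  have symo: "\<forall>i<d. \<forall>j<d. ones_offdiag i j = ones_offdiag j i" by (auto simp: ones_offdiag_def)
  have poso: "\<forall>i<d. \<forall>j<d. i \<noteq> j \<longrightarrow> ones_offdiag i j > 0" by (auto simp: ones_offdiag_def)
  have P: "psd (d - 1) (c_tilde d \<gamma> \<mu> - \<gamma>s \<cdot>\<^sub>m c_tilde d ones_offdiag \<mu>)"
    unfolding psd_def ct_lin
    using ct_transpose[OF symg] ct_nonneg[OF d1 _ symg posg mu]
    by (auto simp: c_tilde_def)
  have C1: "c_tilde d \<gamma> \<mu> \<in> carrier_mat (d - 1) (d - 1)" by (simp add: c_tilde_def)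
  have C2: "c_tilde d ones_offdiag \<mu> \<in> carrier_mat (d - 1) (d - 1)" by (simp add: c_tilde_def)
  have K: "{v \<in> carrier_vec (d - 1). c_tilde d \<gamma> \<mu> *\<^sub>v v = 0\<^sub>v (d - 1)}
         = {v \<in> carrier_vec (d - 1). c_tilde d ones_offdiag \<mu> *\<^sub>v v = 0\<^sub>v (d - 1)}"
    using ct_kernel[OF d1 _ assms(2) assms(4) mu] ct_kernel[OF d1 _ symo poso mu] by blast
  have "vec_space.rank (d - 1) (c_tilde d \<gamma> \<mu>) = vec_space.rank (d - 1) (c_tilde d ones_offdiag \<mu>)"
    using rank_kernel[OF C1] rank_kernel[OF C2] unfolding K by simp
  with P show ?thesis by simp
qed

end
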